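(* Let $0<\alpha<1$, $\lambda\in\mathbb{R}$, $T>0$, integers $N,M\ge 2$, $\tau=T/N$, $h=(b-a)/M$, and grid points $x_i=a+ih$, $0\le i\le M$. Let $\{v_i^n\}$ ($0\le i\le M$, $0\le n\le N$) satisfy $$\mathcal{A}_x\delta_{t}^{\alpha,\lambda} v_i^{n}-\mathcal{A}_t^{\alpha}\delta_{x}^2v_i^{n}=S_i^{n},\quad 1\leq i\leq M-1,\ 1\leq n\leq N,$$ $$v^n_0=0,\quad v^n_M=0,\quad 1\le n\le N,\qquad v^0_i=v_0(x_i),\quad 0\le i\le M,$$ where $v_0(x_0)=v_0(x_M)=0$ and $S_i^n$ are given. If $2-\alpha-e^{\lambda\tau}\ge0$, then for $1<n\le N$, $$\|v^n\|^2\leq \frac{3}{2}e^{2|\lambda|T}\|v^{0}\|^2+\frac{3\Gamma(1-\alpha)T^{\alpha}e^{2|\lambda|T}}{C_{\Omega}} \max_{0\leq n\leq N}\|S^n\|^2,$$ where $\|S^n\|=\sqrt{h\sum_{i=1}^{M-1}(S_i^n)^2}$.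
   Context: $g_k^{\alpha}=(-1)^k\binom{\alpha}{k}$ are the coefficients of $(1-z)^{\alpha}=\sum_{k\ge0}g_k^{\alpha}z^k$ and $g_k^{\alpha,\lambda}=e^{-(k-\frac{\alpha}{2})\lambda\tau}g_k^{\alpha}$. Time operators (applied for each fixed $i$): $\delta_t^{\alpha,\lambda}v_i^n=\tau^{-\alpha}\sum_{k=0}^{n}g_k^{\alpha,\lambda}v_i^{n-k}$ and $\mathcal{A}_t^{\alpha}v_i^n=(1-\frac{\alpha}{2})v_i^n+\frac{\alpha}{2}v_i^{n-1}$. Space operators: $\delta_x^2v_i=h^{-2}(v_{i-1}-2v_i+v_{i+1})$, and $\mathcal{A}_xv_i=\frac{1}{12}(v_{i-1}+10v_i+v_{i+1})$ for $1\le i\le M-1$, $\mathcal{A}_xv_i=v_i$ for $i=0,M$. For grid functions $u,v$ on $\{x_0,\dots,x_M\}$ vanishing at $x_0,x_M$ (the space $V_h$), $(u,v)=h\sum_{i=1}^{M-1}u_iv_i$ and $\|v\|=\sqrt{(v,v)}$. $C_\Omega>0$ is a constant depending only on $\Omega=(a,b)$ (not on $h$) such that $-(\delta_x^2v,v)\ge C_\Omega\|v\|^2$ for all $v\in V_h$ and all mesh sizes $h$. *)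

theory Defs
  imports "HOL-Analysis.Analysis"
begin

text \<open>Grid functions in time and space are represented as v :: nat => nat => real,
  with v n i the value at time level n and spatial node i.\<close>

definition gl_coef :: "real \<Rightarrow> nat \<Rightarrow> real" where
  "gl_coef \<alpha> k = (-1) ^ k * (\<alpha> gchoose k)"

definition tgl_coef :: "real \<Rightarrow> real \<Rightarrow> real \<Rightarrow> nat \<Rightarrow> real" where
  "tgl_coef \<alpha> lam \<tau> k = exp (- (real k - \<alpha> / 2) * lam * \<tau>) * gl_coef \<alpha> k"

definition delta_t :: "real \<Rightarrow> real \<Rightarrow> real \<Rightarrow> (nat \<Rightarrow> nat \<Rightarrow> real) \<Rightarrow> nat \<Rightarrow> nat \<Rightarrow> real" where
  "delta_t \<alpha> lam \<tau> v n i = \<tau> powr (- \<alpha>) * (\<Sum>k = 0..n. tgl_coef \<alpha> lam \<tau> k * v (n - k) i)"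

definition A_t :: "real \<Rightarrow> (nat \<Rightarrow> nat \<Rightarrow> real) \<Rightarrow> nat \<Rightarrow> nat \<Rightarrow> real" where
  "A_t \<alpha> v n i = (1 - \<alpha> / 2) * v n i + \<alpha> / 2 * v (n - 1) i"

definition delta_x2 :: "real \<Rightarrow> (nat \<Rightarrow> real) \<Rightarrow> nat \<Rightarrow> real" where
  "delta_x2 h u i = (u (i - 1) - 2 * u i + u (i + 1)) / h ^ 2"

definition A_x :: "nat \<Rightarrow> (nat \<Rightarrow> real) \<Rightarrow> nat \<Rightarrow> real" where
  "A_x M u i = (if 1 \<le> i \<and> i \<le> M - 1 then (u (i - 1) + 10 * u i + u (i + 1)) / 12 else u i)"

definition grid_inner :: "real \<Rightarrow> nat \<Rightarrow> (nat \<Rightarrow> real) \<Rightarrow> (nat \<Rightarrow> real) \<Rightarrow> real" where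
  "grid_inner h M u w = h * (\<Sum>i = 1..M - 1. u i * w i)"

definition grid_norm :: "real \<Rightarrow> nat \<Rightarrow> (nat \<Rightarrow> real) \<Rightarrow> real" where
  "grid_norm h M u = sqrt (grid_inner h M u u)"

end

theory Submission
  imports Defs
begin


lemma Gamma_ratio:
  fixes \<alpha> :: real and j :: nat
  assumes "0 < \<alpha>" "\<alpha> < 1"
  shows "Gamma (real j + 1) \<le> Gamma (real j + 1 - \<alpha>) * (real j + 1) powr \<alpha>"
proof -
  define x where "x = real j + 1 - \<alpha>"
  have x0: "x > 0" using assms by (simp add: x_def)
  have "(ln \<circ> Gamma) ((1 - \<alpha>) *\<^sub>R x + \<alpha> *\<^sub>R (x + 1)) \<le> (1 - \<alpha>) * (ln \<circ> Gamma) x + \<alpha> * (ln \<circ> Gamma) (x + 1)"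
    using assms x0 by (intro convex_onD[OF log_convex_Gamma_real]) auto
  moreover have "(1 - \<alpha>) *\<^sub>R x + \<alpha> *\<^sub>R (x + 1) = real j + 1" by (simp add: x_def algebra_simps)
  moreover have "Gamma (x + 1) = x * Gamma x"
    using x0 by (intro Gamma_plus1) (auto dest: nonpos_Ints_nonpos)
  ultimately have "ln (Gamma (real j + 1)) \<le> (1 - \<alpha>) * ln (Gamma x) + \<alpha> * (ln x + ln (Gamma x))"
    using x0 Gamma_real_pos[OF x0] by (simp add: ln_mult)
  hence "ln (Gamma (real j + 1)) \<le> ln (Gamma x) + \<alpha> * ln x" by (simp add: algebra_simps)
  hence "Gamma (real j + 1) \<le> exp (ln (Gamma x) + \<alpha> * ln x)"
  proof -
    have g: "Gamma (real j + 1) > 0" by (intro Gamma_real_pos) simp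
    assume h: "ln (Gamma (real j + 1)) \<le> ln (Gamma x) + \<alpha> * ln x"
    have "Gamma (real j + 1) = exp (ln (Gamma (real j + 1)))" using g by simp
    also have "\<dots> \<le> exp (ln (Gamma x) + \<alpha> * ln x)" using h by (simp only: exp_le_cancel_iff)
    finally show ?thesis .
  qed
  also have "\<dots> = Gamma x * x powr \<alpha>" using x0 by (simp add: exp_add powr_def)
  also have "\<dots> \<le> Gamma x * (real j + 1) powr \<alpha>"
    using x0 assms by (intro mult_left_mono powr_mono2) (auto simp: x_def less_imp_le)
  finally show ?thesis by (simp add: x_def)
qed

lemma bsum_eq:
  fixes \<alpha> :: real
  shows "(\<Sum>k = 0..j. gl_coef \<alpha> k) = pochhammer (1 - \<alpha>) j / fact j"
proof -
  have "(\<Sum>k = 0..j. gl_coef \<alpha> k) = (\<Sum>k\<le>j. (\<alpha> gchoose k) * (- 1) ^ k)"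
    by (simp add: gl_coef_def atMost_atLeast0 mult.commute)
  also have "\<dots> = (- 1) ^ j * (\<alpha> - 1 gchoose j)" by (rule gbinomial_sum_lower_neg)
  also have "\<dots> = pochhammer (1 - \<alpha>) j / fact j"
    by (simp add: gbinomial_pochhammer)
  finally show ?thesis .
qed

lemma bsum_Gamma:
  fixes \<alpha> :: real
  assumes "0 < \<alpha>" "\<alpha> < 1"
  shows "(\<Sum>k = 0..j. gl_coef \<alpha> k) * Gamma (1 - \<alpha>) \<ge> 1 / (real j + 1) powr \<alpha>"
proof -
  have gp: "Gamma (1 - \<alpha>) > 0" by (rule Gamma_real_pos) (use assms in simp)
  have nz: "1 - \<alpha> \<notin> \<int>\<^sub>\<le>\<^sub>0" using assms by (auto dest: nonpos_Ints_nonpos)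
  have "(\<Sum>k = 0..j. gl_coef \<alpha> k) * Gamma (1 - \<alpha>) = Gamma (real j + 1 - \<alpha>) / Gamma (real j + 1)"
  proof -
    have e1: "pochhammer (1-\<alpha>) j = Gamma (1-\<alpha> + real j) / Gamma (1-\<alpha>)" by (rule pochhammer_Gamma[OF nz])
    have e2: "fact j = Gamma (real j + 1)" using Gamma_fact[of j, where 'a=real] by (simp add: add.commute)
    have e3: "1 - \<alpha> + real j = real j + 1 - \<alpha>" by simp
    show ?thesis unfolding bsum_eq e1 e2 e3 using gp by (simp add: field_simps)
  qed
  moreover have "Gamma (real j + 1) \<le> Gamma (real j + 1 - \<alpha>) * (real j + 1) powr \<alpha>"
    using Gamma_ratio assms by blast
  moreover have "Gamma (real j + 1) > 0" by simp
  ultimately show ?thesis by (simp add: field_simps)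
qed

lemma gl_nonpos:
  fixes \<alpha> :: real
  assumes "0 < \<alpha>" "\<alpha> < 1" "k \<ge> 1"
  shows "gl_coef \<alpha> k \<le> 0"
proof -
  obtain m where k: "k = Suc m" using assms by (cases k) auto
  have "gl_coef \<alpha> k = pochhammer (- \<alpha>) k / fact k"
    by (simp add: gl_coef_def gbinomial_pochhammer)
  also have "\<dots> = - \<alpha> * pochhammer (1 - \<alpha>) m / fact k"
    by (simp add: k pochhammer_rec)
  also have "\<dots> \<le> 0" using assms pochhammer_pos[of "1 - \<alpha>" m]
    by (simp add: divide_nonpos_pos mult_nonneg_nonneg)
  finally show ?thesis .
qed

lemma bsum_pos:
  fixes \<alpha> :: real
  assumes "\<alpha> < 1"
  shows "(\<Sum>k = 0..j. gl_coef \<alpha> k) > 0"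
  using assms pochhammer_pos[of "1 - \<alpha>" j] by (simp add: bsum_eq)



definition Bf :: "nat \<Rightarrow> (nat \<Rightarrow> real) \<Rightarrow> (nat \<Rightarrow> real) \<Rightarrow> real" where
  "Bf M x y = 10 * (\<Sum>i=1..M-1. x i * y i) + (\<Sum>i<M. x i * y (Suc i) + x (Suc i) * y i)"

lemma sumG1: "(\<Sum>i=1..m. f i) = (\<Sum>i<m. f (Suc i) :: real)"
  by (induction m) auto

lemma sumG2: "(\<Sum>i<Suc m. f i) = f 0 + (\<Sum>i=1..m. f i :: real)"
  by (induction m) auto

lemma Bf_sym: "Bf M x y = Bf M y x"
  unfolding Bf_def by (simp add: mult.commute add.commute)

lemma Bf_add: "Bf M (\<lambda>i. f i + g i) y = Bf M f y + Bf M g y"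
  unfolding Bf_def by (simp add: algebra_simps sum.distrib)

lemma Bf_scale: "Bf M (\<lambda>i. c * f i) y = c * Bf M f y"
  unfolding Bf_def by (simp add: algebra_simps sum_distrib_left)

lemma Bf_zero: "Bf M (\<lambda>i. 0) y = 0"
  unfolding Bf_def by simp

lemma Bf_sum: "Bf M (\<lambda>i. \<Sum>k\<in>K. c k * f k i) y = (\<Sum>k\<in>K. c k * Bf M (f k) y)"
proof (induction K rule: infinite_finite_induct)
  case (infinite A) then show ?case by (simp add: Bf_zero)
next
  case empty then show ?case by (simp add: Bf_zero)
next
  case (insert k F)
  then show ?case by (simp add: Bf_add Bf_scale)
qed

lemma Bf_lin2: "Bf M x (\<lambda>i. a * y i + b * z i) = a * Bf M x y + b * Bf M x z"
  using Bf_add[of M "\<lambda>i. a * y i" "\<lambda>i. b * z i" x] Bf_scale[of M a y x] Bf_scale[of M b z x]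
  by (simp add: Bf_sym)

lemma Ax_Bf:
  assumes "M \<ge> 1" "y 0 = 0" "y M = 0"
  shows "12 * (\<Sum>i=1..M-1. A_x M x i * y i) = Bf M x y"
proof -
  obtain m where m: "M = Suc m" using assms by (cases M) auto
  have "12 * (\<Sum>i=1..M-1. A_x M x i * y i) = (\<Sum>i=1..m. x (i-1) * y i + 10 * (x i * y i) + x (Suc i) * y i)"
    unfolding sum_distrib_left
    by (rule sum.cong) (auto simp: A_x_def m field_simps)
  also have "\<dots> = (\<Sum>i=1..m. x (i-1) * y i) + 10 * (\<Sum>i=1..m. x i * y i) + (\<Sum>i=1..m. x (Suc i) * y i)"
    by (simp add: sum.distrib sum_distrib_left)
  also have "(\<Sum>i=1..m. x (i-1) * y i) = (\<Sum>i<M. x i * y (Suc i))"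
    using assms sumG1[where m=m and f="\<lambda>i. x (i-1) * y i"] by (simp add: m)
  also have "(\<Sum>i=1..m. x (Suc i) * y i) = (\<Sum>i<M. x (Suc i) * y i)"
    using assms sumG2[where m=m and f="\<lambda>i. x (Suc i) * y i"] by (simp add: m del: sum.lessThan_Suc)
  finally show ?thesis by (simp add: Bf_def m sum.distrib)
qed

lemma Bf_pos:
  assumes "M \<ge> 1" "x 0 = 0" "x M = 0"
  shows "8 * (\<Sum>i=1..M-1. x i * x i) \<le> Bf M x x" "Bf M x x \<le> 12 * (\<Sum>i=1..M-1. x i * x i)"
proof -
  obtain m where m: "M = Suc m" using assms by (cases M) auto
  have s1: "(\<Sum>i<M. x i * x i) = (\<Sum>i=1..M-1. x i * x i)"
    using assms sumG2[of "\<lambda>i. x i * x i" m] by (simp add: m del: sum.lessThan_Suc)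
  have s2: "(\<Sum>i<M. x (Suc i) * x (Suc i)) = (\<Sum>i=1..M-1. x i * x i)"
    using assms sumG1[where m=m and f="\<lambda>i. x i * x i"] by (simp add: m)
  have l: "(\<Sum>i<M. x i * x (Suc i) + x (Suc i) * x i) \<ge> - (\<Sum>i<M. x i * x i + x (Suc i) * x (Suc i))"
    unfolding sum_negf[symmetric]
  proof (rule sum_mono)
    fix i show "- (x i * x i + x (Suc i) * x (Suc i)) \<le> x i * x (Suc i) + x (Suc i) * x i"
      using sum_squares_ge_zero[of "x i + x (Suc i)" 0] by (simp add: algebra_simps power2_eq_square)
  qed
  have u: "(\<Sum>i<M. x i * x (Suc i) + x (Suc i) * x i) \<le> (\<Sum>i<M. x i * x i + x (Suc i) * x (Suc i))"
  proof (rule sum_mono)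
    fix i show "x i * x (Suc i) + x (Suc i) * x i \<le> x i * x i + x (Suc i) * x (Suc i)"
      using sum_squares_ge_zero[of "x i - x (Suc i)" 0] by (simp add: algebra_simps power2_eq_square)
  qed
  show "8 * (\<Sum>i=1..M-1. x i * x i) \<le> Bf M x x" using l s1 s2 by (simp add: Bf_def sum.distrib)
  show "Bf M x x \<le> 12 * (\<Sum>i=1..M-1. x i * x i)" using u s1 s2 by (simp add: Bf_def sum.distrib)
qed

lemma Bf_cs:
  assumes "M \<ge> 1" "x 0 = 0" "x M = 0" "y 0 = 0" "y M = 0"
  shows "2 * Bf M x y \<le> Bf M x x + Bf M y y"
proof -
  have z: "(\<lambda>i. x i - y i) 0 = 0" "(\<lambda>i. x i - y i) M = 0" using assms by auto
  have "0 \<le> 8 * (\<Sum>i=1..M-1. (x i - y i) * (x i - y i))" by (simp add: sum_nonneg)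
  also have "\<dots> \<le> Bf M (\<lambda>i. x i - y i) (\<lambda>i. x i - y i)" using Bf_pos(1)[OF assms(1) z] by simp
  also have "Bf M (\<lambda>i. x i - y i) (\<lambda>i. x i - y i) = Bf M x x - 2 * Bf M x y + Bf M y y"
  proof -
    have a: "(\<lambda>i. x i - y i) = (\<lambda>i. 1 * x i + (-1) * y i)" by simp
    show ?thesis
      unfolding a Bf_lin2 using Bf_add[of M "\<lambda>i. 1 * x i" "\<lambda>i. (-1) * y i"] Bf_scale[of M "-1" y] Bf_scale[of M 1 x]
        Bf_sym[of M x y] by simp
  qed
  finally show ?thesis by simp
qed



lemma key:
  fixes g :: "nat \<Rightarrow> real" and p :: "nat \<Rightarrow> nat \<Rightarrow> real" and \<alpha> \<mu> Q :: real and n :: nat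
  assumes n: "n \<ge> 1" and g0: "g 0 = 1" and g1: "g 1 = -\<alpha>" and gk: "\<And>k. k \<ge> 2 \<Longrightarrow> g k \<le> 0"
    and al: "0 < \<alpha>" "\<alpha> < 1" and mu: "\<mu> \<ge> 0" and c1: "(1-\<alpha>/2) * g 1 + \<mu> \<le> 0"
    and psym: "\<And>j m. j \<le> n \<Longrightarrow> m \<le> n \<Longrightarrow> p j m = p m j"
    and pcs: "\<And>j m. j \<le> n \<Longrightarrow> m \<le> n \<Longrightarrow> 2 * p j m \<le> p j j + p m m"
    and pQ: "\<And>j. j < n \<Longrightarrow> p j j \<le> Q"
    and bpos: "0 \<le> (\<Sum>k=0..n. g k)"
    and L: "(\<Sum>k=0..n. g k * ((1-\<alpha>/2) * p (n-k) n + \<mu> * p (n-k) (n-1)))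
            \<le> (1-\<alpha>/2+\<mu>) * (\<Sum>k=0..n. g k) * Q"
  shows "p n n \<le> Q"
proof -
  define F where "F k = g k * ((1-\<alpha>/2) * p (n-k) n + \<mu> * p (n-k) (n-1))" for k
  define X where "X = p n n"
  define Y where "Y = p n (n-1)"
  define Z where "Z = p (n-1) (n-1)"
  define G2 where "G2 = (\<Sum>k=2..n. g k)"
  define c1v where "c1v = (1-\<alpha>/2) * g 1 + \<mu>"
  have sF: "(\<Sum>k=0..n. F k) = F 0 + F 1 + (\<Sum>k=2..n. F k)"
    using n by (simp add: sum.atLeast_Suc_atMost numeral_2_eq_2)
  have sg: "(\<Sum>k=0..n. g k) = g 0 + g 1 + G2"
    using n by (simp add: sum.atLeast_Suc_atMost numeral_2_eq_2 G2_def)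
  have ZQ: "Z \<le> Q" using pQ n by (simp add: Z_def)
  have YXZ: "2 * Y \<le> X + Z" using pcs[of n "n-1"] by (simp add: X_def Y_def Z_def)
  have t01: "F 0 + F 1 = (1-\<alpha>/2) * X + c1v * Y + g 1 * \<mu> * Z"
    using psym[of "n-1" n] n by (simp add: F_def X_def Y_def Z_def c1v_def g0 algebra_simps)
  have c1vY: "c1v * Y \<ge> c1v * ((X + Q)/2)"
    using c1 YXZ ZQ by (intro mult_left_mono_neg) (auto simp: c1v_def)
  have gmuZ: "g 1 * \<mu> * Z \<ge> g 1 * \<mu> * Q"
    using ZQ g1 al mu by (intro mult_left_mono_neg) (auto simp: mult_nonneg_nonneg)
  have t2: "(\<Sum>k=2..n. F k) \<ge> (\<Sum>k=2..n. g k * ((1-\<alpha>/2) * ((X+Q)/2) + \<mu> * Q))"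
  proof (rule sum_mono)
    fix k assume k: "k \<in> {2..n}"
    have j: "n - k < n" "n - k \<le> n" using k by auto
    have a1: "p (n-k) n \<le> (X+Q)/2" using pcs[of "n-k" n] pQ[OF j(1)] by (simp add: X_def)
    have a2: "p (n-k) (n-1) \<le> Q" using pcs[of "n-k" "n-1"] pQ[OF j(1)] pQ[of "n-1"] n by simp
    have "(1-\<alpha>/2) * p (n-k) n + \<mu> * p (n-k) (n-1) \<le> (1-\<alpha>/2) * ((X+Q)/2) + \<mu> * Q"
      using a1 a2 al mu by (intro add_mono mult_left_mono) auto
    then show "g k * ((1-\<alpha>/2) * ((X+Q)/2) + \<mu> * Q) \<le> F k"
      unfolding F_def using gk[of k] k by (intro mult_left_mono_neg) auto
  qed
  also have "(\<Sum>k=2..n. g k * ((1-\<alpha>/2) * ((X+Q)/2) + \<mu> * Q)) = G2 * ((1-\<alpha>/2) * ((X+Q)/2) + \<mu> * Q)"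
    by (simp add: G2_def sum_distrib_right)
  finally have t2': "(\<Sum>k=2..n. F k) \<ge> G2 * ((1-\<alpha>/2) * ((X+Q)/2) + \<mu> * Q)" .
  define c where "c = (1-\<alpha>/2) + c1v/2 + (1-\<alpha>/2)*G2/2"
  have G2b: "G2 \<ge> \<alpha> - 1" using bpos sg g0 g1 by simp
  have h1: "c1v \<ge> -\<alpha> + \<alpha>*\<alpha>/2" using mu g1 by (simp add: c1v_def algebra_simps)
  have "(1-\<alpha>/2)*G2 \<ge> (1-\<alpha>/2)*(\<alpha> - 1)" using G2b al by (intro mult_left_mono) auto
  hence h2: "(1-\<alpha>/2)*G2 \<ge> \<alpha> - 1 - \<alpha>*\<alpha>/2 + \<alpha>/2" 
  proof -
    have "(1-\<alpha>/2)*(\<alpha> - 1) = \<alpha> - 1 - \<alpha>*\<alpha>/2 + \<alpha>/2" by (simp add: field_simps)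
    thus ?thesis using \<open>(1-\<alpha>/2)*G2 \<ge> (1-\<alpha>/2)*(\<alpha> - 1)\<close> by linarith
  qed
  have cpos: "c > 0" unfolding c_def using h1 h2 al by linarith
  have eq: "(1-\<alpha>/2) * X + c1v * ((X + Q)/2) + g 1 * \<mu> * Q + G2 * ((1-\<alpha>/2) * ((X+Q)/2) + \<mu> * Q)
      = c * X + ((1-\<alpha>/2+\<mu>) * (g 0 + g 1 + G2) - c) * Q"
    unfolding c_def c1v_def g0 by (simp add: field_simps)
  have "c * X + ((1-\<alpha>/2+\<mu>) * (g 0 + g 1 + G2) - c) * Q \<le> (1-\<alpha>/2+\<mu>) * (g 0 + g 1 + G2) * Q"
  proof -
    have L': "(\<Sum>k=0..n. F k) \<le> (1-\<alpha>/2+\<mu>) * (g 0 + g 1 + G2) * Q"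
      using L sg unfolding F_def by simp
    show ?thesis using L' sF t01 c1vY gmuZ t2' eq by linarith
  qed
  hence "c * (X - Q) \<le> 0" by (simp add: algebra_simps)
  hence "X - Q \<le> 0" using cpos by (simp add: mult_le_0_iff)
  thus ?thesis by (simp add: X_def)
qed



lemma young:
  fixes C e s u :: real
  assumes "C > 0"
  shows "e * s * u \<le> C * (u * u) + e^2 / (4*C) * (s * s)"
proof -
  have "C * (u * u) + e^2 / (4*C) * (s * s) - e * s * u = (2 * C * u - e * s) ^ 2 / (4 * C)"
    using assms by (simp add: field_simps power2_eq_square)
  moreover have "(2 * C * u - e * s) ^ 2 / (4 * C) \<ge> 0" using assms by simp
  ultimately show ?thesis by linarith
qed

lemma Ax_scale: "A_x M (\<lambda>j. c * f j) i = c * A_x M f i"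
  by (auto simp: A_x_def field_simps)

lemma dx_lin:
  assumes "h \<noteq> 0"
  shows "delta_x2 h (\<lambda>j. c * (p * f j + q * g j)) i = c * (p * delta_x2 h f i + q * delta_x2 h g i)"
  using assms by (simp add: delta_x2_def field_simps)

lemma gi_sq:
  assumes "h \<ge> 0"
  shows "grid_norm h M u ^ 2 = grid_inner h M u u"
proof -
  have "grid_inner h M u u \<ge> 0" using assms unfolding grid_inner_def by (simp add: sum_nonneg)
  thus ?thesis unfolding grid_norm_def by simp
qed

lemma tgl_split:
  fixes E :: real
  assumes "E = exp (lam * \<tau>)" "k \<le> m"
  shows "exp (- (real k - \<alpha> / 2) * lam * \<tau>) = exp (\<alpha>/2 * lam * \<tau>) / E ^ m * E ^ (m - k)"
proof -
  have Ek: "E ^ k = exp (real k * (lam * \<tau>))" using assms by (simp add: exp_of_nat_mult)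
  have "E ^ m = E ^ k * E ^ (m - k)" using assms(2) by (simp flip: power_add)
  moreover have "exp (- (real k - \<alpha> / 2) * lam * \<tau>) = exp (\<alpha>/2 * lam * \<tau>) / E ^ k"
    unfolding Ek by (simp add: algebra_simps exp_diff[symmetric])
  moreover have "E > 0" using assms by simp
  ultimately show ?thesis by (simp add: field_simps)
qed



theorem theorem4p1:
  fixes \<alpha> lam T a b C :: real and N M :: nat
    and v S :: "nat \<Rightarrow> nat \<Rightarrow> real" and v0 :: "real \<Rightarrow> real"
  assumes "0 < \<alpha>" "\<alpha> < 1" "0 < T" "a < b" "N \<ge> 2" "M \<ge> 2"
    and C_pos: "C > 0"
    and C_Omega: "\<And>(M' :: nat) (u :: nat \<Rightarrow> real). M' \<ge> 1 \<Longrightarrow> u 0 = 0 \<Longrightarrow> u M' = 0 \<Longrightarrow>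
        - grid_inner ((b - a) / real M') M' (delta_x2 ((b - a) / real M') u) u
          \<ge> C * (grid_norm ((b - a) / real M') M' u) ^ 2"
    and eq: "\<And>i n. 1 \<le> i \<Longrightarrow> i \<le> M - 1 \<Longrightarrow> 1 \<le> n \<Longrightarrow> n \<le> N \<Longrightarrow>
        A_x M (delta_t \<alpha> lam (T / real N) v n) i
        - A_t \<alpha> (\<lambda>m. delta_x2 ((b - a) / real M) (v m)) n i = S n i"
    and bc: "\<And>n. 1 \<le> n \<Longrightarrow> n \<le> N \<Longrightarrow> v n 0 = 0 \<and> v n M = 0"
    and init: "\<And>i. i \<le> M \<Longrightarrow> v 0 i = v0 (a + real i * ((b - a) / real M))"
    and v0_bd: "v0 a = 0" "v0 b = 0"
    and cond: "2 - \<alpha> - exp (lam * (T / real N)) \<ge> 0"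
  shows "\<And>n. 1 < n \<Longrightarrow> n \<le> N \<Longrightarrow>
     (grid_norm ((b - a) / real M) M (v n)) ^ 2
       \<le> 3 / 2 * exp (2 * \<bar>lam\<bar> * T) * (grid_norm ((b - a) / real M) M (v 0)) ^ 2
        + 3 * Gamma (1 - \<alpha>) * T powr \<alpha> * exp (2 * \<bar>lam\<bar> * T) / C
          * Max ((\<lambda>m. (grid_norm ((b - a) / real M) M (S m)) ^ 2) ` {0..N})"
proof -
  fix n assume n1: "1 < n" and nN: "n \<le> N"
  define h where "h = (b - a) / real M"
  define \<tau> where "\<tau> = T / real N"
  define E where "E = exp (lam * \<tau>)"
  define g where "g = gl_coef \<alpha>"
  define \<mu> where "\<mu> = \<alpha> / 2 * E"
  define \<kappa> where "\<kappa> = 1 - \<alpha>/2 + \<mu>"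
  define c0 where "c0 = \<tau> powr (-\<alpha>) * exp (\<alpha>/2 * lam * \<tau>)"
  define w where "w m i = E ^ m * v m i" for m i
  define W where "W m i = (\<Sum>k=0..m. g k * w (m-k) i)" for m i
  define ut where "ut m i = (1 - \<alpha>/2) * w m i + \<mu> * w (m-1) i" for m i
  define p where "p j m = Bf M (w j) (w m)" for j m
  define bb where "bb m = (\<Sum>k=0..m. g k)" for m
  define maxS where "maxS = Max ((\<lambda>m. (grid_norm h M (S m)) ^ 2) ` {0..N})"
  define RHS where "RHS = 3 / 2 * exp (2 * \<bar>lam\<bar> * T) * (grid_norm h M (v 0)) ^ 2
        + 3 * Gamma (1 - \<alpha>) * T powr \<alpha> * exp (2 * \<bar>lam\<bar> * T) / C * maxS"
  define Q where "Q = 8 * (E ^ n)^2 * RHS / h"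
  have hpos: "h > 0" using assms by (simp add: h_def)
  have taupos: "\<tau> > 0" using assms by (simp add: \<tau>_def)
  have Epos: "E > 0" by (simp add: E_def)
  have M1: "M \<ge> 1" using assms by simp
  have T_eq: "T = real N * \<tau>" using assms by (simp add: \<tau>_def)
  have c0pos: "c0 > 0" using taupos by (simp add: c0_def)
  have bd: "v m 0 = 0 \<and> v m M = 0" if "m \<le> N" for m
  proof (cases "m = 0")
    case True
    have "v 0 M = v0 (a + real M * ((b - a) / real M))" using init by simp
    also have "a + real M * ((b - a) / real M) = b" using M1 by simp
    finally show ?thesis using True init[of 0] v0_bd by simp
  next
    case False then show ?thesis using bc[of m] that by simp
  qed
  have wbd: "w m 0 = 0 \<and> w m M = 0" if "m \<le> N" for m using bd[OF that] by (simp add: w_def)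
  have gQ: "grid_norm h M u ^ 2 = grid_inner h M u u" for u using gi_sq hpos by simp
  have maxS_ge: "grid_inner h M (S m) (S m) \<le> maxS" if "m \<le> N" for m
    unfolding maxS_def gQ[symmetric] using that by (intro Max_ge) auto
  have gi_nn: "grid_inner h M u u \<ge> 0" for u using hpos by (simp add: grid_inner_def sum_nonneg)
  have maxS_nn: "maxS \<ge> 0" using maxS_ge[of 0] gi_nn[of "S 0"] by linarith
  have step1: "(\<Sum>k=0..m. g k * ((1-\<alpha>/2) * p (m-k) m + \<mu> * p (m-k) (m-1)))
      \<le> 12 * (E^m)^2 * grid_inner h M (S m) (S m) / (4 * C * c0 * h)" if m1: "1 \<le> m" and mN: "m \<le> N" for m
  proof -
    have dt: "delta_t \<alpha> lam \<tau> v m = (\<lambda>j. c0 / E ^ m * W m j)"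
    proof
      fix j
      have "delta_t \<alpha> lam \<tau> v m j = \<tau> powr (- \<alpha>) * (\<Sum>k = 0..m. exp (\<alpha>/2 * lam * \<tau>) / E ^ m * (g k * w (m - k) j))"
      proof -
        have "(\<Sum>k=0..m. tgl_coef \<alpha> lam \<tau> k * v (m-k) j) = (\<Sum>k = 0..m. exp (\<alpha>/2 * lam * \<tau>) / E ^ m * (g k * w (m - k) j))"
        proof (rule sum.cong[OF refl])
          fix k assume k: "k \<in> {0..m}"
          show "tgl_coef \<alpha> lam \<tau> k * v (m-k) j = exp (\<alpha>/2 * lam * \<tau>) / E ^ m * (g k * w (m - k) j)"
            unfolding tgl_coef_def using k by (subst tgl_split[OF E_def]) (auto simp: g_def w_def)
        qed
        thus ?thesis unfolding delta_t_def by simp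
      qed
      also have "\<dots> = c0 / E ^ m * W m j"
        unfolding sum_distrib_left[symmetric] by (simp add: c0_def W_def)
      finally show "delta_t \<alpha> lam \<tau> v m j = c0 / E ^ m * W m j" .
    qed
    have ut_eq: "ut m = (\<lambda>j. E ^ m * ((1 - \<alpha>/2) * v m j + \<alpha>/2 * v (m-1) j))"
    proof
      fix j
      have "E * E ^ (m - 1) = E ^ m" using m1 by (simp flip: power_Suc)
      then show "ut m j = E ^ m * ((1 - \<alpha>/2) * v m j + \<alpha>/2 * v (m-1) j)"
        unfolding ut_def w_def \<mu>_def by (simp add: algebra_simps)
    qed
    have utbd: "ut m 0 = 0" "ut m M = 0" using bd[OF mN] bd[of "m-1"] mN by (auto simp: ut_eq)
    have pt: "c0 * A_x M (W m) i - delta_x2 h (ut m) i = E ^ m * S m i" if i: "1 \<le> i" "i \<le> M - 1" for i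
    proof -
      have e: "A_x M (delta_t \<alpha> lam \<tau> v m) i - A_t \<alpha> (\<lambda>m. delta_x2 h (v m)) m i = S m i"
        using eq[OF i m1 mN] by (simp add: h_def \<tau>_def)
      have a1: "A_x M (delta_t \<alpha> lam \<tau> v m) i = c0 / E ^ m * A_x M (W m) i"
        unfolding dt by (rule Ax_scale)
      have a2: "delta_x2 h (ut m) i = E ^ m * A_t \<alpha> (\<lambda>m. delta_x2 h (v m)) m i"
        unfolding ut_eq A_t_def using dx_lin[of h "E^m" "1 - \<alpha>/2" "v m" "\<alpha>/2" "v (m-1)" i] hpos by simp
      show ?thesis using e a1 a2 Epos by (simp add: field_simps)
    qed
    have sum_eq: "c0 * (h * (\<Sum>i=1..M-1. A_x M (W m) i * ut m i)) + (- grid_inner h M (delta_x2 h (ut m)) (ut m))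
        = E ^ m * grid_inner h M (S m) (ut m)"
    proof -
      have "(\<Sum>i=1..M-1. (c0 * A_x M (W m) i - delta_x2 h (ut m) i) * ut m i) = (\<Sum>i=1..M-1. E ^ m * S m i * ut m i)"
        by (rule sum.cong) (auto simp: pt)
      moreover have "(\<Sum>i=1..M-1. (c0 * A_x M (W m) i - delta_x2 h (ut m) i) * ut m i)
          = c0 * (\<Sum>i=1..M-1. A_x M (W m) i * ut m i) - (\<Sum>i=1..M-1. delta_x2 h (ut m) i * ut m i)"
        by (simp add: left_diff_distrib sum_subtractf sum_distrib_left mult.assoc)
      moreover have "(\<Sum>i=1..M-1. E ^ m * S m i * ut m i) = E ^ m * (\<Sum>i=1..M-1. S m i * ut m i)"
        by (simp add: sum_distrib_left mult.assoc)
      ultimately have "c0 * (\<Sum>i=1..M-1. A_x M (W m) i * ut m i) - (\<Sum>i=1..M-1. delta_x2 h (ut m) i * ut m i)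
          = E ^ m * (\<Sum>i=1..M-1. S m i * ut m i)" by simp
      hence "h * (c0 * (\<Sum>i=1..M-1. A_x M (W m) i * ut m i) - (\<Sum>i=1..M-1. delta_x2 h (ut m) i * ut m i))
          = h * (E ^ m * (\<Sum>i=1..M-1. S m i * ut m i))" by simp
      thus ?thesis unfolding grid_inner_def by (simp add: algebra_simps)
    qed
    have co: "- grid_inner h M (delta_x2 h (ut m)) (ut m) \<ge> C * grid_inner h M (ut m) (ut m)"
      using C_Omega[OF M1 utbd] by (simp add: h_def[symmetric] gQ)
    have yo: "E ^ m * grid_inner h M (S m) (ut m) \<le> C * grid_inner h M (ut m) (ut m) + (E^m)^2 / (4*C) * grid_inner h M (S m) (S m)"
    proof -
      have "(\<Sum>i=1..M-1. E ^ m * S m i * ut m i) \<le> (\<Sum>i=1..M-1. C * (ut m i * ut m i) + (E^m)^2 / (4*C) * (S m i * S m i))"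
        by (rule sum_mono) (rule young[OF C_pos])
      hence "h * (\<Sum>i=1..M-1. E ^ m * S m i * ut m i) \<le> h * (\<Sum>i=1..M-1. C * (ut m i * ut m i) + (E^m)^2 / (4*C) * (S m i * S m i))"
        using hpos by (intro mult_left_mono) auto
      thus ?thesis unfolding grid_inner_def by (simp add: algebra_simps sum.distrib sum_distrib_left)
    qed
    have AB: "h * (\<Sum>i=1..M-1. A_x M (W m) i * ut m i) = h / 12 * Bf M (W m) (ut m)"
      using Ax_Bf[OF M1 utbd, of "W m"] by simp
    have BL: "Bf M (W m) (ut m) = (\<Sum>k=0..m. g k * ((1-\<alpha>/2) * p (m-k) m + \<mu> * p (m-k) (m-1)))"
    proof -
      have "Bf M (W m) (ut m) = (\<Sum>k=0..m. g k * Bf M (w (m-k)) (ut m))"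
        unfolding W_def by (rule Bf_sum)
      also have "\<dots> = (\<Sum>k=0..m. g k * ((1-\<alpha>/2) * p (m-k) m + \<mu> * p (m-k) (m-1)))"
        unfolding ut_def p_def by (simp add: Bf_lin2)
      finally show ?thesis .
    qed
    have "c0 * (h / 12 * Bf M (W m) (ut m)) \<le> (E^m)^2 / (4*C) * grid_inner h M (S m) (S m)"
      using sum_eq co yo unfolding AB by linarith
    hence "Bf M (W m) (ut m) \<le> (E^m)^2 / (4*C) * grid_inner h M (S m) (S m) / (c0 * h / 12)"
      using c0pos hpos C_pos by (simp add: field_simps)
    thus ?thesis using BL C_pos c0pos hpos by (simp add: field_simps)
  qed
  have Gpos: "Gamma (1 - \<alpha>) > 0" using assms by (intro Gamma_real_pos) simp
  have Tapos: "T powr \<alpha> \<ge> 0" by simp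
  define e2 where "e2 = exp (2 * \<bar>lam\<bar> * T)"
  have e2pos: "e2 > 0" by (simp add: e2_def)
  have RHS_ge2: "RHS \<ge> 3 * Gamma (1 - \<alpha>) * T powr \<alpha> * e2 / C * maxS"
    unfolding RHS_def e2_def using gQ[of "v 0"] gi_nn[of "v 0"] by simp
  have RHS_ge1: "RHS \<ge> 3 / 2 * e2 * grid_inner h M (v 0) (v 0)"
  proof -
    have "3 * Gamma (1 - \<alpha>) * T powr \<alpha> * e2 / C * maxS \<ge> 0"
      using Gpos e2pos C_pos maxS_nn by simp
    thus ?thesis unfolding RHS_def e2_def using gQ[of "v 0"] by simp
  qed
  have Em: "E ^ m = exp (real m * (lam * \<tau>))" for m by (simp add: E_def exp_of_nat_mult)
  have En_e2: "(E ^ n)^2 * e2 \<ge> 1"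
  proof -
    have "(E ^ n)^2 * e2 = exp (2 * (real n * (lam * \<tau>)) + 2 * \<bar>lam\<bar> * T)"
      by (simp add: Em e2_def exp_add power2_eq_square flip: exp_add)
    moreover have "2 * (real n * (lam * \<tau>)) + 2 * \<bar>lam\<bar> * T \<ge> 0"
    proof -
      have "- (real n * (lam * \<tau>)) \<le> \<bar>real n * (lam * \<tau>)\<bar>" by simp
      also have "\<dots> = real n * \<tau> * \<bar>lam\<bar>" using taupos by (simp add: abs_mult)
      also have "\<dots> \<le> real N * \<tau> * \<bar>lam\<bar>" using nN taupos by (intro mult_right_mono) auto
      also have "\<dots> = \<bar>lam\<bar> * T" using T_eq by simp
      finally show ?thesis by linarith
    qed
    ultimately show ?thesis by simp
  qed
  have step2: "12 * (E^m)^2 * grid_inner h M (S m) (S m) / (4 * C * c0 * h) \<le> \<kappa> * bb m * Q"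
    if m1: "1 \<le> m" and mN: "m \<le> N" for m
  proof -
    define gS where "gS = grid_inner h M (S m) (S m)"
    define G where "G = Gamma (1 - \<alpha>)"
    define Ta where "Ta = T powr \<alpha>"
    define ta where "ta = \<tau> powr \<alpha>"
    define A where "A = (E^m)^2 * exp (- (\<alpha>/2 * lam * \<tau>))"
    have tapos: "ta > 0" using taupos by (simp add: ta_def)
    have gSnn: "gS \<ge> 0" using gi_nn by (simp add: gS_def)
    have aE: "\<alpha> / 2 * E > 0" using assms Epos by simp
    have kap: "\<kappa> \<ge> 1/2" using aE assms unfolding \<kappa>_def \<mu>_def by linarith
    have bbpos: "bb m > 0" using bsum_pos assms by (simp add: bb_def g_def)
    have L1: "12 * (E^m)^2 * gS / (4 * C * c0 * h) = 3 * (A * ta * gS) / (C * h)"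
      unfolding A_def c0_def ta_def using taupos
      by (simp add: powr_minus field_simps exp_minus)
    have L2: "A \<le> (E ^ n)^2 * e2"
    proof -
      have "A = exp (2 * (real m * (lam * \<tau>)) - \<alpha>/2 * lam * \<tau>)"
        unfolding A_def Em by (simp add: power2_eq_square exp_diff exp_minus field_simps flip: exp_add)
      moreover have "(E ^ n)^2 * e2 = exp (2 * (real n * (lam * \<tau>)) + 2 * \<bar>lam\<bar> * T)"
        by (simp add: Em e2_def power2_eq_square flip: exp_add)
      moreover have "2 * (real m * (lam * \<tau>)) - \<alpha>/2 * lam * \<tau> \<le> 2 * (real n * (lam * \<tau>)) + 2 * \<bar>lam\<bar> * T"
      proof -
        define x where "x = 2 * (real m - real n) - \<alpha>/2"
        have xb: "\<bar>x\<bar> \<le> 2 * real N" using m1 mN n1 nN assms unfolding x_def by (simp add: abs_if)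
        have "lam * \<tau> * x \<le> \<bar>lam * \<tau> * x\<bar>" by simp
        also have "\<dots> = \<bar>lam\<bar> * \<tau> * \<bar>x\<bar>" using taupos by (simp add: abs_mult)
        also have "\<dots> \<le> \<bar>lam\<bar> * \<tau> * (2 * real N)" using xb taupos by (intro mult_left_mono) auto
        finally have "lam * \<tau> * x \<le> 2 * \<bar>lam\<bar> * T" using T_eq by (simp add: algebra_simps)
        thus ?thesis unfolding x_def by (simp add: algebra_simps)
      qed
      ultimately show ?thesis by simp
    qed
    have L3: "ta \<le> 8 * \<kappa> * bb m * G * Ta"
    proof -
      have bG: "bb m * G \<ge> 1 / (real m + 1) powr \<alpha>"
        using bsum_Gamma[of \<alpha> m] assms by (simp add: bb_def g_def G_def)
      have "(real m + 1) powr \<alpha> \<le> (2 * real N) powr \<alpha>"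
        using mN assms by (intro powr_mono2) auto
      also have "\<dots> = 2 powr \<alpha> * real N powr \<alpha>" by (simp add: powr_mult)
      also have "2 powr \<alpha> \<le> 2 powr (1::real)" using assms by (intro powr_mono) auto
      hence "2 powr \<alpha> * real N powr \<alpha> \<le> 2 * real N powr \<alpha>" by (simp add: mult_right_mono)
      finally have pw: "(real m + 1) powr \<alpha> \<le> 2 * real N powr \<alpha>" .
      have Npos: "real N powr \<alpha> > 0" using assms by simp
      have mpos: "(real m + 1) powr \<alpha> > 0" by simp
      have "1 / (2 * real N powr \<alpha>) \<le> 1 / (real m + 1) powr \<alpha>"
        using pw Npos mpos by (intro divide_left_mono) auto
      hence bG2: "bb m * G \<ge> 1 / (2 * real N powr \<alpha>)" using bG by linarith
      have Ta_eq: "Ta = real N powr \<alpha> * ta" unfolding Ta_def ta_def T_eq using taupos by (simp add: powr_mult)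
      have "bb m * G * Ta \<ge> 1 / (2 * real N powr \<alpha>) * Ta"
        using bG2 Ta_eq Npos tapos by (intro mult_right_mono) auto
      also have "1 / (2 * real N powr \<alpha>) * Ta = ta / 2" using Ta_eq Npos by simp
      finally have "bb m * G * Ta \<ge> ta / 2" .
      moreover have "bb m * G * Ta \<ge> 0" using \<open>bb m * G * Ta \<ge> ta / 2\<close> tapos by linarith
      ultimately have "8 * \<kappa> * (bb m * G * Ta) \<ge> 8 * (1/2) * (ta / 2)"
        using kap tapos by (intro mult_left_mono mult_mono) auto
      thus ?thesis using tapos by (simp add: algebra_simps)
    qed
    have L4: "gS \<le> maxS" using maxS_ge[OF mN] by (simp add: gS_def)
    have Anonneg: "A \<ge> 0" by (simp add: A_def)
    have "A * ta * gS \<le> ((E ^ n)^2 * e2) * (8 * \<kappa> * bb m * G * Ta) * maxS"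
    proof -
      have nn1: "0 \<le> 8 * \<kappa> * bb m * G * Ta"
        using kap bbpos Gpos Tapos by (simp add: G_def Ta_def)
      have nn2: "0 \<le> (E ^ n)^2 * e2" using e2pos by simp
      have "A * ta \<le> ((E ^ n)^2 * e2) * (8 * \<kappa> * bb m * G * Ta)"
        using L2 L3 Anonneg tapos nn2 by (intro mult_mono) auto
      moreover have "0 \<le> ((E ^ n)^2 * e2) * (8 * \<kappa> * bb m * G * Ta)" using nn1 nn2 by simp
      ultimately show ?thesis by (rule mult_mono[OF _ L4 _ gSnn])
    qed
    hence "3 * (A * ta * gS) \<le> 3 * (((E ^ n)^2 * e2) * (8 * \<kappa> * bb m * G * Ta) * maxS)"
      by (rule mult_left_mono) auto
    hence "3 * (A * ta * gS) / (C * h) \<le> 3 * (((E ^ n)^2 * e2) * (8 * \<kappa> * bb m * G * Ta) * maxS) / (C * h)"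
      using C_pos hpos by (rule_tac divide_right_mono) auto
    also have "\<dots> = \<kappa> * bb m * (8 * (E ^ n)^2 * (3 * G * Ta * e2 / C * maxS) / h)"
      using C_pos hpos by (simp add: field_simps)
    also have "\<dots> \<le> \<kappa> * bb m * Q"
      unfolding Q_def using RHS_ge2 kap bbpos hpos Epos
      by (intro mult_left_mono divide_right_mono) (auto simp: G_def Ta_def)
    finally show ?thesis using L1 by (simp add: gS_def)
  qed
  have step3: "p 0 0 \<le> Q"
  proof -
    define sv where "sv = (\<Sum>i=1..M-1. v 0 i * v 0 i)"
    have svnn: "sv \<ge> 0" by (simp add: sv_def sum_nonneg)
    have "p 0 0 \<le> 12 * sv"
    proof -
      have "w 0 = v 0" by (rule ext) (simp add: w_def)
      thus ?thesis using Bf_pos(2)[OF M1, of "v 0"] bd[of 0] by (simp add: p_def sv_def)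
    qed
    also have "12 * sv \<le> 12 * ((E ^ n)^2 * e2) * sv" using En_e2 svnn by (simp add: mult_right_mono)
    also have "\<dots> = 8 * (E ^ n)^2 * (3 / 2 * e2 * grid_inner h M (v 0) (v 0)) / h"
      using hpos by (simp add: grid_inner_def sv_def field_simps)
    also have "\<dots> \<le> Q" unfolding Q_def using RHS_ge1 hpos Epos
      by (intro divide_right_mono mult_left_mono) auto
    finally show ?thesis .
  qed
  have Ele: "E \<le> 2 - \<alpha>" using cond by (simp add: E_def \<tau>_def)
  have allQ: "p m m \<le> Q" if "m \<le> N" for m
    using that
  proof (induction m rule: less_induct)
    case (less m)
    show ?case
    proof (cases "m = 0")
      case True then show ?thesis using step3 by simp
    next
      case False
      hence m1: "1 \<le> m" by simp
      show ?thesis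
      proof (rule key[where g = g and \<alpha> = \<alpha> and \<mu> = \<mu> and p = p and n = m and Q = Q])
        show "1 \<le> m" by (rule m1)
        show "g 0 = 1" by (simp add: g_def gl_coef_def)
        show "g 1 = - \<alpha>" by (simp add: g_def gl_coef_def)
        show "g k \<le> 0" if "2 \<le> k" for k using gl_nonpos[of \<alpha> k] assms that by (simp add: g_def)
        show "0 < \<alpha>" "\<alpha> < 1" using assms by auto
        show "0 \<le> \<mu>" using assms Epos by (simp add: \<mu>_def)
        have "\<alpha>/2 * (E - (2 - \<alpha>)) \<le> 0" using assms Ele by (intro mult_nonneg_nonpos) auto
        moreover have "(1 - \<alpha>/2) * g 1 + \<mu> = \<alpha>/2 * (E - (2 - \<alpha>))"
          by (simp add: g_def gl_coef_def \<mu>_def field_simps)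
        ultimately show "(1 - \<alpha>/2) * g 1 + \<mu> \<le> 0" by linarith
        show "p j m' = p m' j" if "j \<le> m" "m' \<le> m" for j m' by (simp add: p_def Bf_sym)
        show "2 * p j m' \<le> p j j + p m' m'" if "j \<le> m" "m' \<le> m" for j m'
          using Bf_cs[OF M1] wbd[of j] wbd[of m'] that less.prems by (simp add: p_def)
        show "p j j \<le> Q" if "j < m" for j using less.IH[of j] that less.prems by simp
        show "0 \<le> (\<Sum>k = 0..m. g k)" using bsum_pos[of \<alpha> m] assms by (simp add: g_def)
        have "(\<Sum>k=0..m. g k * ((1-\<alpha>/2) * p (m-k) m + \<mu> * p (m-k) (m-1))) \<le> \<kappa> * bb m * Q"
          using step1[OF m1 less.prems] step2[OF m1 less.prems] by linarith
        thus "(\<Sum>k=0..m. g k * ((1-\<alpha>/2) * p (m-k) m + \<mu> * p (m-k) (m-1))) \<le> (1-\<alpha>/2+\<mu>) * (\<Sum>k=0..m. g k) * Q"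
          by (simp add: \<kappa>_def bb_def)
      qed
    qed
  qed
  have fin: "grid_inner h M (v n) (v n) \<le> RHS"
  proof -
    define sv where "sv = (\<Sum>i=1..M-1. v n i * v n i)"
    have "8 * ((E ^ n)^2 * sv) \<le> p n n"
      using Bf_pos(1)[OF M1, of "w n"] wbd[OF nN]
      by (simp add: p_def w_def sv_def sum_distrib_left power2_eq_square algebra_simps)
    also have "\<dots> \<le> Q" using allQ[OF nN] .
    finally have "8 * ((E ^ n)^2 * sv) \<le> 8 * (E ^ n)^2 * RHS / h" unfolding Q_def .
    hence "sv \<le> RHS / h" using Epos hpos by (simp add: field_simps)
    thus ?thesis using hpos by (simp add: grid_inner_def sv_def field_simps)
  qed
  show "(grid_norm ((b - a) / real M) M (v n)) ^ 2 \<le> 3 / 2 * exp (2 * \<bar>lam\<bar> * T) * (grid_norm ((b - a) / real M) M (v 0)) ^ 2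
        + 3 * Gamma (1 - \<alpha>) * T powr \<alpha> * exp (2 * \<bar>lam\<bar> * T) / C
          * Max ((\<lambda>m. (grid_norm ((b - a) / real M) M (S m)) ^ 2) ` {0..N})"
    using fin gQ[of "v n"] unfolding RHS_def maxS_def h_def by simp
qed

end
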